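(* Let $p>2$ be a prime and let $a,b\in\mathbb{C}_p$ with $a\neq0$, $b\neq0$, $a\neq b$ and $|2a|_p>|b|_p$. Let $P=-\frac1b$, $D=\mathbb{C}_p\setminus\{P\}$, $f(x)=\frac{ax^2}{bx+1}$ on $D$, $x_1=0$, $x_2=\frac1{a-b}$, and $r_1=\frac{1}{|a|_p}$. Then $x_1$ is an attracting fixed point and $x_2$ is an indifferent fixed point of $f$, and $$A(x_1)=B_{r_1}(x_1),\qquad SI(x_2)=B_{r_1}(x_2).$$
   Context: $\mathbb{C}_p$ is the field of complex $p$-adic numbers with $p$-adic norm $|\cdot|_p$. For $c\in\mathbb{C}_p$, $r>0$: $B_r(c)=\{x:|x-c|_p<r\}$, $S_r(c)=\{x:|x-c|_p=r\}$. For $y\in D$, $y^{(n)}=f^n(y)$ is the $n$-th iterate (defined as long as no earlier iterate equals $P$). A fixed point $x^{(0)}$ of $f$ is attracting if $|f'(x^{(0)})|_p<1$ and indifferent if $|f'(x^{(0)})|_p=1$. Its basin of attraction is $A(x^{(0)})=\{y: y^{(n)}\text{ defined for all }n,\ y^{(n)}\to x^{(0)}\}$. A ball $B_r(x^{(0)})$ contained in $D$ is a Siegel disk of $x^{(0)}$ if every sphere $S_\rho(x^{(0)})$ with $\rho<r$ is invariant, i.e. $x\in S_\rho(x^{(0)})$ implies $x^{(n)}\in S_\rho(x^{(0)})$ for all $n\ge1$; the maximal Siegel disk $SI(x^{(0)})$ is the union of all Siegel disks centered at $x^{(0)}$. *)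

theory Defs
  imports "HOL-Computational_Algebra.Polynomial"
begin

text \<open>C_p is modelled axiomatically: a field (of characteristic 0) together with an
absolute value N such that (field, N) is a complete, algebraically closed,
non-archimedean valued field with N p = 1/p in which the algebraic numbers are dense.
These properties characterise C_p up to isometric isomorphism.\<close>

definition is_Cp :: "nat \<Rightarrow> ('a::field_char_0 \<Rightarrow> real) \<Rightarrow> bool" where
  "is_Cp p N \<longleftrightarrow>
     (\<forall>x. N x \<ge> 0) \<and> (\<forall>x. N x = 0 \<longleftrightarrow> x = 0) \<and>
     (\<forall>x y. N (x * y) = N x * N y) \<and>
     (\<forall>x y. N (x + y) \<le> max (N x) (N y)) \<and>
     N (of_nat p) = 1 / real p \<and>
     (\<forall>X :: nat \<Rightarrow> 'a. (\<forall>e>0. \<exists>M. \<forall>m\<ge>M. \<forall>n\<ge>M. N (X m - X n) < e) \<longrightarrow>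
          (\<exists>L. \<forall>e>0. \<exists>M. \<forall>n\<ge>M. N (X n - L) < e)) \<and>
     (\<forall>q :: 'a poly. degree q > 0 \<longrightarrow> (\<exists>x. poly q x = 0)) \<and>
     (\<forall>x e. e > 0 \<longrightarrow> (\<exists>y. (\<exists>q :: int poly. q \<noteq> 0 \<and> poly (map_poly of_int q) y = 0)
                                 \<and> N (x - y) < e))"

definition pball :: "('a::ab_group_add \<Rightarrow> real) \<Rightarrow> 'a \<Rightarrow> real \<Rightarrow> 'a set" where
  "pball N c r = {x. N (x - c) < r}"

definition psphere :: "('a::ab_group_add \<Rightarrow> real) \<Rightarrow> 'a \<Rightarrow> real \<Rightarrow> 'a set" where
  "psphere N c r = {x. N (x - c) = r}"

definition has_pderiv :: "('a::field \<Rightarrow> real) \<Rightarrow> 'a set \<Rightarrow> ('a \<Rightarrow> 'a) \<Rightarrow> 'a \<Rightarrow> 'a \<Rightarrow> bool" where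
  "has_pderiv N D f x d \<longleftrightarrow>
     (\<forall>e>0. \<exists>\<delta>>0. \<forall>y\<in>D. 0 < N (y - x) \<and> N (y - x) < \<delta> \<longrightarrow>
        N ((f y - f x) / (y - x) - d) < e)"

definition fixed_pt :: "'a set \<Rightarrow> ('a \<Rightarrow> 'a) \<Rightarrow> 'a \<Rightarrow> bool" where
  "fixed_pt D f x \<longleftrightarrow> x \<in> D \<and> f x = x"

definition attracting_fp :: "('a::field \<Rightarrow> real) \<Rightarrow> 'a set \<Rightarrow> ('a \<Rightarrow> 'a) \<Rightarrow> 'a \<Rightarrow> bool" where
  "attracting_fp N D f x \<longleftrightarrow> fixed_pt D f x \<and> (\<exists>d. has_pderiv N D f x d \<and> N d < 1)"

definition indifferent_fp :: "('a::field \<Rightarrow> real) \<Rightarrow> 'a set \<Rightarrow> ('a \<Rightarrow> 'a) \<Rightarrow> 'a \<Rightarrow> bool" where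
  "indifferent_fp N D f x \<longleftrightarrow> fixed_pt D f x \<and> (\<exists>d. has_pderiv N D f x d \<and> N d = 1)"

definition basin :: "('a::ab_group_add \<Rightarrow> real) \<Rightarrow> 'a set \<Rightarrow> ('a \<Rightarrow> 'a) \<Rightarrow> 'a \<Rightarrow> 'a set" where
  "basin N D f x0 = {y. (\<forall>n. (f ^^ n) y \<in> D) \<and>
       (\<forall>e>0. \<exists>M. \<forall>n\<ge>M. N ((f ^^ n) y - x0) < e)}"

definition siegel_disk :: "('a::ab_group_add \<Rightarrow> real) \<Rightarrow> 'a set \<Rightarrow> ('a \<Rightarrow> 'a) \<Rightarrow> 'a \<Rightarrow> real \<Rightarrow> bool" where
  "siegel_disk N D f x0 r \<longleftrightarrow> r > 0 \<and> pball N x0 r \<subseteq> D \<and>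
     (\<forall>\<rho>. \<rho> < r \<longrightarrow> (\<forall>x \<in> psphere N x0 \<rho>. \<forall>n\<ge>1. (f ^^ n) x \<in> psphere N x0 \<rho>))"

definition max_siegel :: "('a::ab_group_add \<Rightarrow> real) \<Rightarrow> 'a set \<Rightarrow> ('a \<Rightarrow> 'a) \<Rightarrow> 'a \<Rightarrow> 'a set" where
  "max_siegel N D f x0 = \<Union> {pball N x0 r | r. siegel_disk N D f x0 r}"

end

theory Submission
  imports Defs
begin


locale nv =
  fixes N :: "'a::field_char_0 \<Rightarrow> real"
  assumes nonneg: "N x \<ge> 0"
    and zero: "N x = 0 \<longleftrightarrow> x = 0"
    and mult: "N (x * y) = N x * N y"
    and ultra: "N (x + y) \<le> max (N x) (N y)"
begin

lemma one: "N 1 = 1"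
proof -
  have "N 1 = N 1 * N 1" using mult[of 1 1] by simp
  moreover have "N 1 \<noteq> 0" using zero by simp
  ultimately show ?thesis by (metis mult_cancel_right1)
qed

lemma minus1: "N (-1) = 1"
proof -
  have "N (-1) * N (-1) = 1" using mult[of "-1" "-1"] one by simp
  moreover have "N (-1) \<ge> 0" by (rule nonneg)
  ultimately show ?thesis
    by (metis abs_of_nonneg abs_square_eq_1 power2_eq_square)
qed

lemma uminus: "N (- x) = N x"
  using mult[of "-1" x] minus1 by simp

lemma diff_comm: "N (x - y) = N (y - x)"
  using uminus[of "x - y"] by simp

lemma divide: "N (x / y) = N x / N y"
proof (cases "y = 0")
  case True then show ?thesis using zero[of 0] by simp
next
  case False
  have "N (x / y) * N y = N x" using mult[of "x/y" y] False by simp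
  moreover have "N y > 0" using False zero nonneg by (metis less_eq_real_def)
  ultimately show ?thesis by (simp add: field_simps)
qed

lemma power: "N (x ^ n) = N x ^ n"
  by (induction n) (simp_all add: one mult)

lemma ultra_eq: assumes "N x < N y" shows "N (x + y) = N y"
proof -
  have 1: "N (x + y) \<le> N y" using ultra[of x y] assms by simp
  have "N y \<le> max (N (x + y)) (N (- x))" using ultra[of "x + y" "- x"] by simp
  then have "N y \<le> N (x + y)" using assms uminus[of x] by (auto simp: max_def split: if_splits)
  with 1 show ?thesis by simp
qed

lemma ultra_eq': assumes "N x < N y" shows "N (y + x) = N y"
  using ultra_eq[OF assms] by (simp add: add.commute)

lemma nat_le1: "N (of_nat n) \<le> 1"
proof (induction n)
  case 0 then show ?case using zero[of 0] by simp
next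
  case (Suc n)
  have "N (of_nat n + 1) \<le> max (N (of_nat n)) (N 1)" by (rule ultra)
  then show ?case using Suc one by (simp add: add.commute)
qed

lemma two: assumes "prime p" "p > 2" "N (of_nat p) = 1 / real p" shows "N 2 = 1"
proof -
  have "odd p" using assms by (metis prime_odd_nat)
  then obtain k where k: "p = 2 * k + 1" by (metis oddE)
  have le: "N 2 \<le> 1" using nat_le1[of 2] by simp
  have eq: "(1::'a) = of_nat p + (- of_nat k) * 2" using k by simp
  show ?thesis
  proof (rule ccontr)
    assume "N 2 \<noteq> 1"
    then have lt: "N 2 < 1" using le by simp
    have "N (1::'a) \<le> max (N (of_nat p)) (N ((- of_nat k) * 2))"
      using ultra[of "of_nat p" "(- of_nat k) * 2"] eq by simp
    also have "N ((- of_nat k :: 'a) * 2) = N (of_nat k) * N 2" by (simp add: mult uminus)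
    also have "N (of_nat k) * N 2 < 1"
      using nat_le1[of k] lt nonneg[of 2] nonneg[of "of_nat k"]
      by (metis dual_order.strict_trans2 mult_le_one less_eq_real_def mult_less_cancel_right1 mult.commute mult_left_le)
    moreover have "N (of_nat p) < 1" using assms by simp
    ultimately show False using one by (simp add: max_def split: if_splits)
  qed
qed

end

locale dyn = nv +
  fixes a b
  assumes b0: "b \<noteq> 0" and ab: "N b < N a" and N2: "N 2 = 1"
begin

lemma a0: "a \<noteq> 0" and Na: "N a > 0"
  using ab nonneg[of b] zero[of a] by auto

lemma Nb: "N b > 0" using b0 zero[of b] nonneg[of b] by auto

lemma Nab: "N (a - b) = N a"
  using ultra_eq[of "- b" a] ab uminus[of b] by simp

lemma N2ab: "N (2 * a - b) = N a"
  using ultra_eq[of "- b" "2 * a"] ab uminus[of b] mult[of 2 a] N2 by simp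

lemma small:
  assumes "N z < 1 / N a"
  shows "N (b * z + 1) = 1" "N (a * z ^ 2 / (b * z + 1)) = N a * N z ^ 2"
proof -
  have "N (b * z) = N b * N z" by (rule mult)
  also have "\<dots> \<le> N a * N z" using ab nonneg[of z] by (simp add: mult_right_mono)
  also have "\<dots> < 1" using assms Na by (simp add: field_simps)
  finally have "N (b * z) < N 1" using one by simp
  then show 1: "N (b * z + 1) = 1" using ultra_eq one by metis
  show "N (a * z ^ 2 / (b * z + 1)) = N a * N z ^ 2"
    by (simp add: divide mult power 1)
qed

lemma big:
  assumes "N z \<ge> 1 / N a" "b * z + 1 \<noteq> 0"
  shows "N (a * z ^ 2 / (b * z + 1)) \<ge> 1 / N a"
proof -
  have fz: "N (a * z ^ 2 / (b * z + 1)) = N a * N z ^ 2 / N (b * z + 1)"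
    by (simp add: divide mult power)
  have c0: "N (b * z + 1) > 0" using assms(2) zero nonneg by (metis less_eq_real_def)
  have z0: "N z > 0" using assms(1) Na by (meson divide_pos_pos less_le_trans zero_less_one)
  have "N (b * z + 1) \<le> max (N b * N z) 1" using ultra[of "b * z" 1] mult one by simp
  then consider "N (b * z + 1) \<le> 1" | "N (b * z + 1) \<le> N b * N z" by linarith
  then show ?thesis
  proof cases
    case 1
    have "1 / N a = N a * (1 / N a) ^ 2" using Na by (simp add: power2_eq_square)
    also have "\<dots> \<le> N a * N z ^ 2"
      using assms(1) Na by (intro mult_left_mono power_mono) auto
    also have "\<dots> \<le> N a * N z ^ 2 / N (b * z + 1)"
      using 1 c0 Na z0 by (simp add: divide_simps)
    finally show ?thesis using fz by simp
  next
    case 2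
    have "N a * N z ^ 2 / N (b * z + 1) \<ge> N a * N z ^ 2 / (N b * N z)"
      using 2 c0 Na z0 by (intro divide_left_mono) auto
    moreover have "N a * N z ^ 2 / (N b * N z) = N a * N z / N b"
      using z0 Nb by (simp add: power2_eq_square)
    moreover have "N a * N z / N b \<ge> N z"
      using ab Nb z0 by (simp add: divide_simps)
    ultimately show ?thesis using fz assms(1) by linarith
  qed
qed

lemma pderiv:
  assumes "b * x + 1 \<noteq> 0"
  shows "has_pderiv N D (\<lambda>x. a * x ^ 2 / (b * x + 1)) x (a * (2 * x + b * x ^ 2) / (b * x + 1) ^ 2)"
  unfolding has_pderiv_def
proof (intro allI impI)
  fix e :: real assume e: "e > 0"
  define c where "c = N (b * x + 1)"
  have c0: "c > 0" using assms zero nonneg unfolding c_def by (metis less_eq_real_def)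
  define \<delta> where "\<delta> = min (c / (N b + 1)) (e * c ^ 3 / (N a + 1))"
  have d0: "\<delta> > 0" unfolding \<delta>_def using c0 e nonneg[of a] nonneg[of b] by simp
  show "\<exists>\<delta>>0. \<forall>y\<in>D. 0 < N (y - x) \<and> N (y - x) < \<delta> \<longrightarrow>
        N ((a * y ^ 2 / (b * y + 1) - a * x ^ 2 / (b * x + 1)) / (y - x) - a * (2 * x + b * x ^ 2) / (b * x + 1) ^ 2) < e"
  proof (intro exI[of _ \<delta>] conjI d0 ballI impI)
    fix y assume y: "y \<in> D" "0 < N (y - x) \<and> N (y - x) < \<delta>"
    have yx: "y - x \<noteq> 0" using y(2) zero[of "y - x"] by auto
    have "N (b * (y - x)) = N b * N (y - x)" by (rule mult)
    also have "\<dots> \<le> N b * \<delta>" using y nonneg[of b] by (simp add: mult_left_mono)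
    also have "\<dots> \<le> N b * (c / (N b + 1))" unfolding \<delta>_def using nonneg[of b] by (intro mult_left_mono) auto
    also have "\<dots> < c" using c0 nonneg[of b] by (simp add: divide_simps)
    finally have "N (b * (y - x)) < N (b * x + 1)" unfolding c_def .
    then have "N (b * (y - x) + (b * x + 1)) = c" unfolding c_def by (rule ultra_eq)
    then have cy: "N (b * y + 1) = c" by (simp add: algebra_simps)
    then have by0: "b * y + 1 \<noteq> 0" using c0 zero[of "b * y + 1"] by auto
    have iden: "(a * y ^ 2 / (b * y + 1) - a * x ^ 2 / (b * x + 1)) / (y - x) - a * (2 * x + b * x ^ 2) / (b * x + 1) ^ 2
        = a * (y - x) / ((b * x + 1) ^ 2 * (b * y + 1))"
    proof -
      have "a * y ^ 2 / (b * y + 1) - a * x ^ 2 / (b * x + 1) = a * (y - x) * (y + x + b * x * y) / ((b * y + 1) * (b * x + 1))"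
        using by0 assms by (simp add: divide_simps) (simp add: algebra_simps power2_eq_square)
      then have "(a * y ^ 2 / (b * y + 1) - a * x ^ 2 / (b * x + 1)) / (y - x) = a * (y + x + b * x * y) / ((b * y + 1) * (b * x + 1))"
        using yx by simp
      moreover have "a * (y + x + b * x * y) / ((b * y + 1) * (b * x + 1)) - a * (2 * x + b * x ^ 2) / (b * x + 1) ^ 2
          = a * (y - x) / ((b * x + 1) ^ 2 * (b * y + 1))"
        using by0 assms by (simp add: divide_simps) (simp add: algebra_simps power2_eq_square)
      ultimately show ?thesis by simp
    qed
    have "N (a * (y - x) / ((b * x + 1) ^ 2 * (b * y + 1))) = N a * N (y - x) / c ^ 3"
      by (simp add: divide mult power cy c_def[symmetric] power3_eq_cube power2_eq_square)
    also have "\<dots> \<le> N a * \<delta> / c ^ 3"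
      using y c0 nonneg[of a] by (intro divide_right_mono mult_left_mono) auto
    also have "\<dots> \<le> N a * (e * c ^ 3 / (N a + 1)) / c ^ 3"
      unfolding \<delta>_def using c0 nonneg[of a] by (intro divide_right_mono mult_left_mono) auto
    also have "\<dots> = e * (N a / (N a + 1))"
    proof -
      have l: "\<And>(A::real) c e. A \<ge> 0 \<Longrightarrow> c > 0 \<Longrightarrow> A * (e * c ^ 3 / (A + 1)) / c ^ 3 = e * (A / (A + 1))"
        by (simp add: divide_simps)
      show ?thesis using l[OF nonneg[of a] c0] .
    qed
    also have "\<dots> < e" using e nonneg[of a] by (simp add: divide_simps)
    finally have fin: "N (a * (y - x) / ((b * x + 1) ^ 2 * (b * y + 1))) < e" .
    show "N ((a * y ^ 2 / (b * y + 1) - a * x ^ 2 / (b * x + 1)) / (y - x) - a * (2 * x + b * x ^ 2) / (b * x + 1) ^ 2) < e"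
      unfolding iden by (rule fin)
  qed
qed


definition F where "F x = a * x ^ 2 / (b * x + 1)"

lemma iter_small:
  assumes "N y < 1 / N a"
  shows "N a * N ((F ^^ n) y) \<le> (N a * N y) ^ Suc n \<and> N ((F ^^ n) y) < 1 / N a"
proof (induction n)
  case 0 then show ?case using assms by simp
next
  case (Suc n)
  define z where "z = (F ^^ n) y"
  have IH: "N a * N z \<le> (N a * N y) ^ Suc n" "N z < 1 / N a" using Suc unfolding z_def by auto
  have Fz: "N (F z) = N a * N z ^ 2" using small(2)[OF IH(2)] unfolding F_def .
  have t0: "0 \<le> N a * N z" using Na nonneg[of z] by simp
  have t1: "N a * N z < 1" using IH(2) Na by (simp add: field_simps)
  have "N a * N (F z) = (N a * N z) * (N a * N z)" using Fz by (simp add: power2_eq_square)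
  also have "\<dots> \<le> (N a * N z) * 1" using t0 t1 by (intro mult_left_mono) auto
  finally have A: "N a * N (F z) \<le> N a * N z" by simp
  have "N a * N (F z) \<le> (N a * N y) * (N a * N z)"
  proof -
    have "N a * N y < 1" using assms Na by (simp add: field_simps)
    have "N a * N z \<le> (N a * N y) ^ Suc n" by (rule IH(1))
    also have "\<dots> \<le> (N a * N y) ^ 1" using Na nonneg[of y] \<open>N a * N y < 1\<close>
      by (intro power_decreasing) auto
    also have "\<dots> = N a * N y" by simp
    finally have "(N a * N z) \<le> N a * N y" .
    then have "(N a * N z) * (N a * N z) \<le> (N a * N y) * (N a * N z)"
      using t0 by (rule mult_right_mono)
    then show ?thesis using \<open>N a * N (F z) = (N a * N z) * (N a * N z)\<close> by linarith
  qed
  also have "\<dots> \<le> (N a * N y) * (N a * N y) ^ Suc n"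
    using IH(1) Na nonneg[of y] by (intro mult_left_mono) auto
  finally have B: "N a * N (F z) \<le> (N a * N y) ^ Suc (Suc n)" by simp
  have "N a * N (F z) < 1" using A t1 by linarith
  then have "N (F z) < 1 / N a" using Na by (simp add: field_simps)
  then show ?case using B unfolding z_def by simp
qed

lemma iter_big:
  assumes "N y \<ge> 1 / N a" "\<And>n. b * (F ^^ n) y + 1 \<noteq> 0"
  shows "N ((F ^^ n) y) \<ge> 1 / N a"
proof (induction n)
  case 0 then show ?case using assms by simp
next
  case (Suc n)
  have "N (F ((F ^^ n) y)) \<ge> 1 / N a" using big[OF Suc assms(2)[of n]] unfolding F_def .
  then show ?case by simp
qed

lemma denom_id: "(a - b) * (b * x + 1) = a + b * (a - b) * (x - 1 / (a - b))"
proof -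
  have "a - b \<noteq> 0" using Nab Na zero[of "a-b"] by auto
  then show ?thesis by (simp add: divide_simps) (simp add: algebra_simps)
qed

lemma sieg_id:
  assumes "b * x + 1 \<noteq> 0"
  shows "F x - 1 / (a - b) = (x - 1 / (a - b)) * (2 * a - b + a * (a - b) * (x - 1 / (a - b))) / ((a - b) * (b * x + 1))"
proof -
  have "a - b \<noteq> 0" using Nab Na zero[of "a-b"] by auto
  then show ?thesis using assms unfolding F_def
    by (simp add: divide_simps) (simp add: algebra_simps power2_eq_square)
qed

lemma sieg_small:
  assumes "N (x - 1 / (a - b)) < 1 / N a"
  shows "b * x + 1 \<noteq> 0" "N (F x - 1 / (a - b)) = N (x - 1 / (a - b))"
proof -
  define h where "h = x - 1 / (a - b)"
  have h: "N h * N a < 1" using assms Na unfolding h_def by (simp add: field_simps)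
  have h': "N a * N h < 1" using h by (simp add: mult.commute)
  have "N (b * (a - b) * h) = N b * N a * N h" by (simp add: mult Nab)
  also have "\<dots> \<le> N a * N a * N h" using ab nonneg[of h] Na by (intro mult_right_mono) auto
  also have "\<dots> < N a" using h' Na by (simp add: mult.assoc)
  finally have "N (a + b * (a - b) * h) = N a" by (rule ultra_eq')
  then have den: "N ((a - b) * (b * x + 1)) = N a" using denom_id unfolding h_def by simp
  then show bx: "b * x + 1 \<noteq> 0" using Na zero[of "(a - b) * (b * x + 1)"] by auto
  have "N (a * (a - b) * h) = N a * N a * N h" by (simp add: mult Nab)
  also have "\<dots> < N a" using h' Na by (simp add: mult.assoc)
  finally have num: "N (2 * a - b + a * (a - b) * h) = N a" using N2ab by (simp add: ultra_eq')
  show "N (F x - 1 / (a - b)) = N (x - 1 / (a - b))"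
    using sieg_id[OF bx] num den Na unfolding h_def[symmetric] by (simp add: divide mult)
qed

lemma sieg_pt:
  defines "x \<equiv> 1 / (a - b) + (- (2 * a - b) / (a * (a - b)))"
  shows "N (x - 1 / (a - b)) = 1 / N a" "b * x + 1 \<noteq> 0" "F x = 1 / (a - b)"
proof -
  have ab0: "a - b \<noteq> 0" using Nab Na zero[of "a-b"] by auto
  show 1: "N (x - 1 / (a - b)) = 1 / N a" unfolding x_def
    using Na diff_comm[of b "2 * a"] by (simp add: divide mult uminus N2ab Nab power2_eq_square)
  have "N (b * (a - b) * (x - 1 / (a - b))) = N b * N a * (1 / N a)" using 1 by (simp add: mult Nab)
  also have "\<dots> < N a" using ab Na by simp
  finally have "N (a + b * (a - b) * (x - 1 / (a - b))) = N a" by (rule ultra_eq')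
  then have den: "N ((a - b) * (b * x + 1)) = N a" using denom_id by simp
  then show bx: "b * x + 1 \<noteq> 0" using Na zero[of "(a - b) * (b * x + 1)"] by auto
  have "2 * a - b + a * (a - b) * (x - 1 / (a - b)) = 0" unfolding x_def using a0 ab0 by simp
  then show "F x = 1 / (a - b)" using sieg_id[OF bx] by simp
qed

end

lemma is_Cp_nv: "is_Cp p N \<Longrightarrow> nv N"
  unfolding is_Cp_def nv_def by blast



theorem theorem3p6:
  fixes p :: nat and N :: "'a::field_char_0 \<Rightarrow> real" and a b :: 'a
  assumes "prime p" and "p > 2" and "is_Cp p N"
    and "a \<noteq> 0" and "b \<noteq> 0" and "a \<noteq> b" and "N (2 * a) > N b"
  defines "P \<equiv> - 1 / b"
  defines "D \<equiv> UNIV - {P}"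
  defines "f \<equiv> (\<lambda>x. a * x ^ 2 / (b * x + 1))"
  defines "x1 \<equiv> 0"
  defines "x2 \<equiv> 1 / (a - b)"
  defines "r1 \<equiv> 1 / N a"
  shows "attracting_fp N D f x1 \<and> indifferent_fp N D f x2 \<and>
         basin N D f x1 = pball N x1 r1 \<and> max_siegel N D f x2 = pball N x2 r1"
proof -
  interpret nv N using assms(3) by (rule is_Cp_nv)
  have N2: "N 2 = 1" using two[OF assms(1,2)] assms(3) unfolding is_Cp_def by blast
  have NbNa: "N b < N a" using assms(7) mult[of 2 a] N2 by simp
  interpret dyn N a b by unfold_locales (use assms(5) NbNa N2 in auto)
  have fF: "f = F" unfolding f_def by (rule ext) (simp add: F_def)
  have inD: "x \<in> D \<longleftrightarrow> b * x + 1 \<noteq> 0" for x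
  proof -
    have "x = P \<longleftrightarrow> b * x = - 1" unfolding P_def using assms(5)
      by (auto simp: field_simps)
    also have "\<dots> \<longleftrightarrow> b * x + 1 = 0" by (rule eq_neg_iff_add_eq_0)
    finally have "x = P \<longleftrightarrow> b * x + 1 = 0" .
    then show ?thesis unfolding D_def by auto
  qed
  have ab0: "a - b \<noteq> 0" using assms(6) by simp
  have r1pos: "r1 > 0" unfolding r1_def using Na by simp
  have att: "attracting_fp N D f x1"
    unfolding attracting_fp_def fixed_pt_def
  proof (intro conjI exI)
    show "x1 \<in> D" unfolding x1_def inD by simp
    show "f x1 = x1" unfolding x1_def f_def by simp
    show "has_pderiv N D f x1 0"
      using pderiv[of x1 D] unfolding x1_def f_def by simp
    show "N 0 < 1" using zero[of 0] by simp
  qed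
  have x2small: "N (x2 - 1 / (a - b)) < 1 / N a" unfolding x2_def using zero[of 0] Na by simp
  have bx2: "b * x2 + 1 \<noteq> 0" using sieg_small(1)[OF x2small] .
  have ind: "indifferent_fp N D f x2"
    unfolding indifferent_fp_def fixed_pt_def
  proof (intro conjI exI)
    show "x2 \<in> D" using bx2 inD by simp
    have "N (F x2 - x2) = 0" using sieg_small(2)[OF x2small] zero[of 0] unfolding x2_def by simp
    then show "f x2 = x2" using fF zero[of "F x2 - x2"] by simp
    show "has_pderiv N D f x2 (a * (2 * x2 + b * x2 ^ 2) / (b * x2 + 1) ^ 2)"
      using pderiv[OF bx2, of D] unfolding f_def .
    have "a * (2 * x2 + b * x2 ^ 2) / (b * x2 + 1) ^ 2 = (2 * a - b) / a"
      unfolding x2_def using ab0 assms(4) bx2 unfolding x2_def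
      by (simp add: divide_simps) (simp add: algebra_simps power2_eq_square)
    then show "N (a * (2 * x2 + b * x2 ^ 2) / (b * x2 + 1) ^ 2) = 1"
      using N2ab Na by (simp add: divide)
  qed
  have bas: "basin N D f x1 = pball N x1 r1"
  proof (rule set_eqI)
    fix y
    show "y \<in> basin N D f x1 \<longleftrightarrow> y \<in> pball N x1 r1"
    proof
      assume y: "y \<in> basin N D f x1"
      show "y \<in> pball N x1 r1"
      proof (rule ccontr)
        assume "y \<notin> pball N x1 r1"
        then have ge: "N y \<ge> 1 / N a" unfolding pball_def x1_def r1_def by simp
        have "\<And>n. b * (F ^^ n) y + 1 \<noteq> 0" using y unfolding basin_def fF inD by simp
        then have all: "\<And>n. N ((F ^^ n) y) \<ge> 1 / N a" using iter_big[OF ge] by blast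
        obtain M where "\<forall>n\<ge>M. N ((f ^^ n) y - x1) < 1 / N a"
          using y r1pos unfolding basin_def r1_def by blast
        then have "N ((F ^^ M) y) < 1 / N a" unfolding fF x1_def by simp
        with all[of M] show False by simp
      qed
    next
      assume y: "y \<in> pball N x1 r1"
      then have ys: "N y < 1 / N a" unfolding pball_def x1_def r1_def by simp
      have "(F ^^ n) y \<in> D" for n
        using small(1)[OF conjunct2[OF iter_small[OF ys, of n]]] one zero[of 0] inD by force
      moreover have "\<exists>M. \<forall>n\<ge>M. N ((F ^^ n) y - x1) < e" if e: "e > 0" for e
      proof -
        define t where "t = N a * N y"
        have t0: "0 \<le> t" unfolding t_def using Na nonneg[of y] by simp
        have t1: "t < 1" unfolding t_def using ys Na by (simp add: field_simps)
        obtain M where M: "t ^ M < e * N a" using real_arch_pow_inv[of "e * N a" t] e Na t1 by auto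
        show ?thesis
        proof (intro exI allI impI)
          fix n assume n: "M \<le> n"
          have "N a * N ((F ^^ n) y) \<le> t ^ Suc n" using iter_small[OF ys, of n] unfolding t_def by simp
          also have "\<dots> \<le> t ^ M" using t0 t1 n by (intro power_decreasing) auto
          also have "\<dots> < e * N a" by (rule M)
          finally show "N ((F ^^ n) y - x1) < e" unfolding x1_def using Na by (simp add: mult.commute)
        qed
      qed
      ultimately show "y \<in> basin N D f x1" unfolding basin_def fF by blast
    qed
  qed
  have sph: "(F ^^ n) x \<in> psphere N x2 \<rho>" if "\<rho> < r1" "x \<in> psphere N x2 \<rho>" for n x \<rho>
  proof (induction n)
    case 0 then show ?case using that by simp
  next
    case (Suc n)
    have "N ((F ^^ n) x - x2) < 1 / N a" using Suc that unfolding psphere_def r1_def by simp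
    then have "N (F ((F ^^ n) x) - x2) = N ((F ^^ n) x - x2)" using sieg_small(2) unfolding x2_def by blast
    then show ?case using Suc unfolding psphere_def by simp
  qed
  have sd: "siegel_disk N D f x2 r1"
    unfolding siegel_disk_def
  proof (intro conjI allI impI ballI subsetI r1pos)
    fix x assume "x \<in> pball N x2 r1"
    then have "N (x - 1 / (a - b)) < 1 / N a" unfolding pball_def x2_def r1_def by simp
    then show "x \<in> D" using sieg_small(1) inD by blast
  next
    fix \<rho> x n assume "\<rho> < r1" "x \<in> psphere N x2 \<rho>" "1 \<le> (n::nat)"
    then show "(f ^^ n) x \<in> psphere N x2 \<rho>" using sph fF by blast
  qed
  have le: "r \<le> r1" if "siegel_disk N D f x2 r" for r
  proof (rule ccontr)
    assume "\<not> r \<le> r1"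
    define xp where "xp = 1 / (a - b) + (- (2 * a - b) / (a * (a - b)))"
    have "xp \<in> psphere N x2 r1" using sieg_pt(1) unfolding xp_def psphere_def x2_def r1_def by simp
    moreover have "\<forall>x\<in>psphere N x2 r1. \<forall>n\<ge>1. (f ^^ n) x \<in> psphere N x2 r1"
      using that \<open>\<not> r \<le> r1\<close> unfolding siegel_disk_def by auto
    ultimately have "(f ^^ 1) xp \<in> psphere N x2 r1" by blast
    moreover have "(f ^^ 1) xp = x2" using sieg_pt(3) unfolding fF xp_def x2_def by simp
    ultimately show False using r1pos zero[of 0] unfolding psphere_def by simp
  qed
  have sieg: "max_siegel N D f x2 = pball N x2 r1"
  proof
    show "max_siegel N D f x2 \<subseteq> pball N x2 r1"
      unfolding max_siegel_def using le by (fastforce simp: pball_def)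
    show "pball N x2 r1 \<subseteq> max_siegel N D f x2"
      unfolding max_siegel_def using sd by blast
  qed
  show ?thesis using att ind bas sieg by blast
qed

end
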